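(* Let $q$ be a prime power and let $\mathrm{Aff}(\mathbb{F}_q)$ be the affine group. Let $A\subseteq \mathrm{Aff}(\mathbb{F}_q)$ be a set and let $\Gamma\subseteq \mathrm{Aff}(\mathbb{F}_q)$ be a subgroup such that for every non-trivial multiplicative character $\chi$ of $\mathbb{F}_q^*$ there is $\gamma=(a,b)\in\Gamma$ with $\chi(a)\neq 1$. Let $z\in \mathrm{Aff}(\mathbb{F}_q)$ be arbitrary and let $n\ge 1$ be an integer such that $|A|^n|\Gamma|^2 > q^{n+2}(q-1)^2$. Then $A^n\cap z\Gamma\neq\emptyset$ and $A^n\cap \Gamma z\neq\emptyset$.
   Context: $\mathrm{Aff}(\mathbb{F}_q)$ is the group of matrices $\begin{pmatrix} a & b\\ 0 & 1\end{pmatrix}$ with $a\in\mathbb{F}_q^*=\mathbb{F}_q\setminus\{0\}$, $b\in\mathbb{F}_q$, under matrix multiplication; such an element is written $(a,b)$. For a set $A$ in a group, $A^n=\{a_1\cdots a_n : a_i\in A\}$, and $z\Gamma=\{z\gamma:\gamma\in\Gamma\}$, $\Gamma z=\{\gamma z:\gamma\in\Gamma\}$. *)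

theory Defs
  imports "HOL-Algebra.Coset" Complex_Main
begin

text \<open>The affine group Aff(F_q): the pair (a,b) stands for the matrix [[a,b],[0,1]],
  so (a,b)(c,d) = (a c, a d + b).\<close>

definition aff_mult :: "'a::field \<times> 'a \<Rightarrow> 'a \<times> 'a \<Rightarrow> 'a \<times> 'a" where
  "aff_mult x y = (fst x * fst y, fst x * snd y + snd x)"

definition Aff :: "('a::field \<times> 'a) monoid" where
  "Aff = \<lparr>carrier = {x. fst x \<noteq> 0}, mult = aff_mult, one = (1, 0)\<rparr>"

text \<open>A multiplicative character of F^*: a homomorphism F^* -> C^* (values at 0 irrelevant).\<close>

definition mult_char :: "('a::field \<Rightarrow> complex) \<Rightarrow> bool" where
  "mult_char \<chi> \<longleftrightarrow> (\<forall>x y. x \<noteq> 0 \<longrightarrow> y \<noteq> 0 \<longrightarrow> \<chi> (x * y) = \<chi> x * \<chi> y)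
                  \<and> (\<forall>x. x \<noteq> 0 \<longrightarrow> \<chi> x \<noteq> 0)"

definition nontrivial_char :: "('a::field \<Rightarrow> complex) \<Rightarrow> bool" where
  "nontrivial_char \<chi> \<longleftrightarrow> (\<exists>x. x \<noteq> 0 \<and> \<chi> x \<noteq> 1)"

fun aff_setpow :: "('a::field \<times> 'a) set \<Rightarrow> nat \<Rightarrow> ('a \<times> 'a) set" where
  "aff_setpow A 0 = {(1, 0)}"
| "aff_setpow A (Suc n) = {aff_mult x a | x a. x \<in> aff_setpow A n \<and> a \<in> A}"

end

theory Submission
  imports Defs "HOL-Algebra.Multiplicative_Group"
begin

lemma Aff_group: "group (Aff :: ('a::field \<times> 'a) monoid)"
proof (rule groupI)
  show "\<And>x y. x \<in> carrier (Aff::('a \<times> 'a) monoid) \<Longrightarrow> y \<in> carrier Aff \<Longrightarrow> x \<otimes>\<^bsub>Aff\<^esub> y \<in> carrier Aff"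
    by (auto simp: Aff_def aff_mult_def)
  show "\<one>\<^bsub>Aff\<^esub> \<in> carrier (Aff::('a \<times> 'a) monoid)" by (simp add: Aff_def)
  show "\<And>x y z. x \<in> carrier (Aff::('a \<times> 'a) monoid) \<Longrightarrow> y \<in> carrier Aff \<Longrightarrow> z \<in> carrier Aff \<Longrightarrow>
          x \<otimes>\<^bsub>Aff\<^esub> y \<otimes>\<^bsub>Aff\<^esub> z = x \<otimes>\<^bsub>Aff\<^esub> (y \<otimes>\<^bsub>Aff\<^esub> z)"
    by (auto simp: Aff_def aff_mult_def algebra_simps)
  show "\<And>x. x \<in> carrier (Aff::('a \<times> 'a) monoid) \<Longrightarrow> \<one>\<^bsub>Aff\<^esub> \<otimes>\<^bsub>Aff\<^esub> x = x"
    by (auto simp: Aff_def aff_mult_def)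
  fix x :: "'a \<times> 'a" assume x: "x \<in> carrier Aff"
  show "\<exists>y\<in>carrier Aff. y \<otimes>\<^bsub>Aff\<^esub> x = \<one>\<^bsub>Aff\<^esub>"
    using x by (intro bexI[of _ "(1 / fst x, - snd x / fst x)"]) (auto simp: Aff_def aff_mult_def field_simps)
qed

lemma Aff_inv: "x \<in> carrier (Aff :: ('a::field \<times> 'a) monoid) \<Longrightarrow> inv\<^bsub>Aff\<^esub> x = (1 / fst x, - snd x / fst x)"
  by (rule group.inv_equality[OF Aff_group]) (auto simp: Aff_def aff_mult_def field_simps)

lemma Aff_simps: "carrier Aff = {x. fst x \<noteq> 0}" "x \<otimes>\<^bsub>Aff\<^esub> y = aff_mult x y" "\<one>\<^bsub>Aff\<^esub> = (1,0)"
  by (simp_all add: Aff_def)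

definition tring :: "'a::field ring" where
  "tring = \<lparr>carrier = UNIV, monoid.mult = (\<lambda>x y. x * y), one = 1, ring.zero = 0, add = (\<lambda>x y. x + y)\<rparr>"

lemma tring_field: "field (tring :: 'a::field ring)"
proof -
  have "\<exists>y. x + y = 0" for x :: 'a
    using add.right_inverse by blast
  moreover have "x \<noteq> 0 \<Longrightarrow> \<exists>y. x * y = 1" for x :: 'a
    by (rule exI[of _ "inverse x"]) auto
  ultimately show ?thesis
    unfolding tring_def using add.right_inverse
    by unfold_locales (auto simp:algebra_simps Units_def)
qed

lemma gen_exists: "\<exists>g::'a::{finite,field}. g \<noteq> 0 \<and> (\<forall>x. x \<noteq> 0 \<longrightarrow> (\<exists>i::nat. x = g ^ i))"
proof -
  let ?R = "tring :: 'a ring"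
  interpret field ?R by (rule tring_field)
  have "finite (carrier ?R)" by simp
  then obtain a where a: "a \<in> carrier (mult_of ?R)" "carrier (mult_of ?R) = {a[^]\<^bsub>?R\<^esub>i | i::nat . i \<in> UNIV}"
    using finite_field_mult_group_has_gen by blast
  have pw: "a [^]\<^bsub>?R\<^esub> (i::nat) = a ^ i" for i
    by (induction i) (simp_all add: tring_def)
  have "x \<noteq> 0 \<Longrightarrow> \<exists>i::nat. x = a ^ i" for x
  proof -
    assume "x \<noteq> 0"
    hence "x \<in> carrier (mult_of ?R)" by (simp add: tring_def)
    then obtain i :: nat where "x = a [^]\<^bsub>?R\<^esub> i" using a(2) by blast
    thus ?thesis using pw by blast
  qed
  moreover have "a \<noteq> 0" using a(1) by (simp add: tring_def)
  ultimately show ?thesis by blast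
qed

lemma cis_cong_d:
  assumes "int d dvd (int a - int b)" "d > 0"
  shows "cis (2 * pi * real a / real d) = cis (2 * pi * real b / real d)"
proof -
  obtain t where t: "int a - int b = int d * t" using assms(1) by (auto simp: dvd_def)
  have "real a = real b + real d * of_int t"
    using arg_cong[OF t, of "of_int :: int \<Rightarrow> real"] by (simp add: algebra_simps)
  hence "2 * pi * real a / real d = 2 * pi * real b / real d + 2 * pi * of_int t"
    using assms(2) by (simp add: field_simps)
  thus ?thesis by (simp add: cis_mult[symmetric])
qed

lemma slope_surj:
  fixes \<Gamma> :: "('a::{finite,field} \<times> 'a) set"
  assumes sub: "subgroup \<Gamma> Aff"
    and hyp: "\<forall>ch::'a \<Rightarrow> complex. mult_char ch \<and> nontrivial_char ch \<longrightarrow> (\<exists>\<gamma>\<in>\<Gamma>. ch (fst \<gamma>) \<noteq> 1)"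
    and c: "c \<noteq> 0"
  shows "\<exists>e. (c, e) \<in> \<Gamma>"
proof (rule ccontr)
  assume nc: "\<not> (\<exists>e. (c, e) \<in> \<Gamma>)"
  define H where "H = fst ` \<Gamma>"
  have sc: "\<Gamma> \<subseteq> carrier Aff" using sub by (rule subgroup.subset)
  have H0: "x \<in> H \<Longrightarrow> x \<noteq> 0" for x using sc by (auto simp: H_def Aff_simps)
  have H1: "1 \<in> H" using subgroup.one_closed[OF sub] by (force simp: H_def Aff_simps)
  have H2: "x \<in> H \<Longrightarrow> y \<in> H \<Longrightarrow> x * y \<in> H" for x y
  proof -
    assume "x \<in> H" "y \<in> H"
    then obtain u v where "u \<in> \<Gamma>" "v \<in> \<Gamma>" "x = fst u" "y = fst v" by (auto simp: H_def)
    moreover have "u \<otimes>\<^bsub>Aff\<^esub> v \<in> \<Gamma>" using subgroup.m_closed[OF sub] calculation by blast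
    ultimately show ?thesis by (force simp: H_def Aff_simps aff_mult_def)
  qed
  have H3: "x \<in> H \<Longrightarrow> inverse x \<in> H" for x
  proof -
    assume "x \<in> H"
    then obtain u where u: "u \<in> \<Gamma>" "x = fst u" by (auto simp: H_def)
    have "inv\<^bsub>Aff\<^esub> u \<in> \<Gamma>" using subgroup.m_inv_closed[OF sub u(1)] .
    moreover have "inv\<^bsub>Aff\<^esub> u = (1 / fst u, - snd u / fst u)" using Aff_inv u sc by blast
    ultimately show ?thesis using u by (force simp: H_def field_simps)
  qed
  have Hpow: "x \<in> H \<Longrightarrow> x ^ m \<in> H" for x m
    by (induction m) (auto simp: H1 H2)
  have cH: "c \<notin> H" using nc by (force simp: H_def)
  obtain g :: 'a where g0: "g \<noteq> 0" and gen: "\<And>x. x \<noteq> 0 \<Longrightarrow> \<exists>i::nat. x = g ^ i"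
    using gen_exists by blast
  have "\<not> inj_on (\<lambda>i::nat. g ^ i) {..card (UNIV::'a set)}"
  proof
    assume "inj_on (\<lambda>i::nat. g ^ i) {..card (UNIV::'a set)}"
    hence "card {..card (UNIV::'a set)} \<le> card (UNIV :: 'a set)"
      by (rule card_inj_on_le) auto
    thus False by simp
  qed
  then obtain i j where ij: "i < j" "g ^ i = g ^ j"
    unfolding inj_on_def by (metis linorder_neqE_nat atMost_iff)
  have "g ^ j = g ^ i * g ^ (j - i)" using ij(1) by (simp add: power_add[symmetric])
  hence gji: "g ^ (j - i) = 1" using ij(2) g0 by simp
  define P where "P k \<longleftrightarrow> 0 < k \<and> g ^ k \<in> H" for k
  have "P (j - i)" using gji ij(1) H1 by (simp add: P_def)
  define d where "d = (LEAST k. P k)"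
  have Pd: "P d" unfolding d_def by (rule LeastI) fact
  have dmin: "k < d \<Longrightarrow> \<not> P k" for k unfolding d_def by (rule not_less_Least)
  have d0: "d > 0" and gdH: "g ^ d \<in> H" using Pd by (auto simp: P_def)
  have pwH: "g ^ i \<in> H \<longleftrightarrow> d dvd i" for i
  proof
    assume "d dvd i"
    then obtain m where "i = d * m" by (auto simp: dvd_def)
    hence "g ^ i = (g ^ d) ^ m" by (simp add: power_mult)
    thus "g ^ i \<in> H" using Hpow[OF gdH, of m] by simp
  next
    assume gi: "g ^ i \<in> H"
    have e1: "d * (i div d) + i mod d = i" by (rule mult_div_mod_eq)
    have "g ^ i = (g ^ d) ^ (i div d) * g ^ (i mod d)"
      by (subst e1[symmetric]) (simp only: power_add power_mult)
    moreover have nz: "(g ^ d) ^ (i div d) \<noteq> 0" using g0 by simp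
    ultimately have "g ^ (i mod d) = g ^ i * inverse ((g ^ d) ^ (i div d))"
      by (simp add: mult.commute[of _ "g ^ (i mod d)"])
    moreover have "inverse ((g ^ d) ^ (i div d)) \<in> H" using H3 Hpow gdH by blast
    ultimately have "g ^ (i mod d) \<in> H" using H2 gi by simp
    hence "\<not> (i mod d > 0)" using dmin[of "i mod d"] d0 by (simp add: P_def)
    thus "d dvd i" by auto
  qed
  have cong: "g ^ a = g ^ b \<Longrightarrow> int d dvd (int a - int b)" for a b
  proof -
    have *: "g ^ a = g ^ b \<Longrightarrow> b \<le> a \<Longrightarrow> int d dvd (int a - int b)" for a b
    proof -
      assume "g ^ a = g ^ b" "b \<le> a"
      moreover have "g ^ a = g ^ b * g ^ (a - b)" using \<open>b \<le> a\<close> by (simp add: power_add[symmetric])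
      ultimately have "g ^ (a - b) = 1" using g0 by simp
      hence "d dvd (a - b)" using pwH H1 by metis
      thus ?thesis using \<open>b \<le> a\<close> by (metis of_nat_diff int_dvd_int_iff)
    qed
    assume "g ^ a = g ^ b"
    thus ?thesis using *[of a b] *[of b a] by (metis dvd_diff_commute nat_le_linear)
  qed
  define dl where "dl x = (SOME i::nat. x = g ^ i)" for x
  have dl: "x \<noteq> 0 \<Longrightarrow> g ^ dl x = x" for x
    unfolding dl_def by (metis (mono_tags) gen someI)
  define ch where "ch x = cis (2 * pi * real (dl x) / real d)" for x
  have mc: "mult_char ch"
    unfolding mult_char_def
  proof (intro conjI allI impI)
    fix x y :: 'a assume x: "x \<noteq> 0" and y: "y \<noteq> 0"
    have "g ^ dl (x * y) = g ^ (dl x + dl y)" using x y dl by (simp add: power_add)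
    hence "ch (x * y) = cis (2 * pi * real (dl x + dl y) / real d)"
      unfolding ch_def using cong cis_cong_d d0 by blast
    also have "\<dots> = ch x * ch y" unfolding ch_def
      by (simp add: cis_mult add_divide_distrib distrib_left)
    finally show "ch (x * y) = ch x * ch y" .
  qed (simp add: ch_def)
  have d1: "d \<noteq> 1"
  proof
    assume "d = 1"
    hence "g ^ i \<in> H" for i using pwH by simp
    thus False using gen[OF c] cH by blast
  qed
  have "ch g = cis (2 * pi * real 1 / real d)"
    unfolding ch_def using cong[of "dl g" 1] dl[OF g0] cis_cong_d[of d "dl g" 1] d0 by simp
  moreover have "cis (2 * pi * real 1 / real d) \<noteq> 1"
  proof
    assume "cis (2 * pi * real 1 / real d) = 1"
    hence "cos (2 * pi * real 1 / real d) = 1" by (metis cis.sel(1) one_complex.simps(1))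
    then obtain n :: int where "2 * pi * real 1 / real d = n * 2 * pi"
      unfolding cos_one_2pi_int by auto
    hence "pi * 2 * (1 / real d) = pi * 2 * of_int n" by (simp add: mult_ac)
    hence "1 / real d = of_int n" using pi_gt_zero by (subst (asm) mult_left_cancel) auto
    moreover have "0 < 1 / real d" "1 / real d < 1" using d0 d1 by auto
    ultimately show False by (metis of_int_0_less_iff of_int_less_1_iff not_less zero_less_one int_one_le_iff_zero_less less_le_not_le)
  qed
  ultimately have nt: "nontrivial_char ch" unfolding nontrivial_char_def using g0 by auto
  obtain \<gamma> where \<gamma>: "\<gamma> \<in> \<Gamma>" "ch (fst \<gamma>) \<noteq> 1" using hyp mc nt by blast
  have fH: "fst \<gamma> \<in> H" using \<gamma> by (simp add: H_def)
  hence "d dvd dl (fst \<gamma>)" using pwH dl H0 by metis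
  then obtain m where "dl (fst \<gamma>) = d * m" by (auto simp: dvd_def)
  hence "ch (fst \<gamma>) = cis (2 * pi * real_of_int (int m))"
    unfolding ch_def using d0 by (simp add: mult_ac)
  thus False using \<gamma>(2) by simp
qed

lemma classify:
  fixes \<Gamma> :: "('a::{finite,field} \<times> 'a) set"
  assumes sub: "subgroup \<Gamma> Aff"
    and surj: "\<And>c. c \<noteq> 0 \<Longrightarrow> \<exists>e. (c, e) \<in> \<Gamma>"
  shows "\<Gamma> = carrier Aff \<or> (card \<Gamma> \<le> card (UNIV::'a set) - 1 \<and>
           (\<exists>x0. \<forall>g\<in>carrier Aff. fst g * x0 + snd g = x0 \<longrightarrow> g \<in> \<Gamma>))"
proof -
  have sc: "\<Gamma> \<subseteq> carrier Aff" using sub by (rule subgroup.subset)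
  have mc: "x \<in> \<Gamma> \<Longrightarrow> y \<in> \<Gamma> \<Longrightarrow> aff_mult x y \<in> \<Gamma>" for x y
    using subgroup.m_closed[OF sub] by (simp add: Aff_simps)
  have ic: "x \<in> \<Gamma> \<Longrightarrow> (1 / fst x, - snd x / fst x) \<in> \<Gamma>" for x
    using subgroup.m_inv_closed[OF sub] Aff_inv sc by fastforce
  have oc: "(1, 0) \<in> \<Gamma>" using subgroup.one_closed[OF sub] by (simp add: Aff_simps)
  have nz: "x \<in> \<Gamma> \<Longrightarrow> fst x \<noteq> 0" for x using sc by (auto simp: Aff_simps)
  show ?thesis
  proof (cases "\<exists>t. t \<noteq> 0 \<and> (1, t) \<in> \<Gamma>")
    case True
    then obtain t where t: "t \<noteq> 0" "(1, t) \<in> \<Gamma>" by blast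
    have tr: "(1, s) \<in> \<Gamma>" for s
    proof (cases "s = 0")
      case True thus ?thesis using oc by simp
    next
      case False
      obtain b where b: "(s / t, b) \<in> \<Gamma>" using surj[of "s / t"] False t by auto
      have "aff_mult (aff_mult (s / t, b) (1, t)) (1 / (s / t), - b / (s / t)) \<in> \<Gamma>"
        using mc[OF mc[OF b t(2)] ic[OF b]] by simp
      moreover have "aff_mult (aff_mult (s / t, b) (1, t)) (1 / (s / t), - b / (s / t)) = (1, s)"
        using False t(1) by (simp add: aff_mult_def field_simps)
      ultimately show ?thesis by simp
    qed
    have "carrier Aff \<subseteq> \<Gamma>"
    proof
      fix g :: "'a \<times> 'a" assume "g \<in> carrier Aff"
      then obtain b where b: "(fst g, b) \<in> \<Gamma>" using surj by (auto simp: Aff_simps)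
      have "aff_mult (1, snd g - b) (fst g, b) = g" by (simp add: aff_mult_def)
      thus "g \<in> \<Gamma>" using mc[OF tr[of "snd g - b"] b] by simp
    qed
    thus ?thesis using sc by blast
  next
    case False
    have uniq: "(c, e) \<in> \<Gamma> \<Longrightarrow> (c, e') \<in> \<Gamma> \<Longrightarrow> e = e'" for c e e'
    proof -
      assume a: "(c, e) \<in> \<Gamma>" "(c, e') \<in> \<Gamma>"
      have c0: "c \<noteq> 0" using nz[OF a(1)] by simp
      have "aff_mult (c, e) (1 / c, - e' / c) \<in> \<Gamma>" using mc[OF a(1) ic[OF a(2)]] by simp
      moreover have "aff_mult (c, e) (1 / c, - e' / c) = (1, e - e')" using c0 by (simp add: aff_mult_def)
      ultimately show ?thesis using False by force
    qed
    have inj: "inj_on fst \<Gamma>" by (rule inj_onI) (metis prod.collapse uniq)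
    have "card \<Gamma> \<le> card (UNIV - {0::'a})"
      by (rule card_inj_on_le[OF inj]) (use nz in force)+
    hence cardG: "card \<Gamma> \<le> card (UNIV::'a set) - 1" by (simp add: card_Diff_singleton)
    have "\<exists>x0. \<forall>g\<in>carrier Aff. fst g * x0 + snd g = x0 \<longrightarrow> g \<in> \<Gamma>"
    proof (cases "\<exists>a::'a. a \<noteq> 0 \<and> a \<noteq> 1")
      case True
      then obtain a :: 'a where a: "a \<noteq> 0" "a \<noteq> 1" by blast
      obtain b where b: "(a, b) \<in> \<Gamma>" using surj a by auto
      define x0 where "x0 = b / (1 - a)"
      show ?thesis
      proof (intro exI ballI impI)
        fix g :: "'a \<times> 'a" assume g: "g \<in> carrier Aff" "fst g * x0 + snd g = x0"
        obtain e' where e': "(fst g, e') \<in> \<Gamma>" using surj g by (auto simp: Aff_simps)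
        have "aff_mult (a, b) (fst g, e') \<in> \<Gamma>" "aff_mult (fst g, e') (a, b) \<in> \<Gamma>"
          using mc b e' by auto
        hence "(a * fst g, a * e' + b) \<in> \<Gamma>" "(a * fst g, fst g * b + e') \<in> \<Gamma>"
          by (simp_all add: aff_mult_def mult.commute)
        hence eq: "a * e' + b = fst g * b + e'" using uniq by blast
        have a1: "1 - a \<noteq> 0" using a by simp
        have "e' = x0 * (1 - fst g)"
          using eq a1 unfolding x0_def by (simp add: field_simps)
        moreover have "snd g = x0 * (1 - fst g)" using g(2) by (simp add: algebra_simps)
        ultimately have "g = (fst g, e')" by (simp add: prod_eq_iff)
        thus "g \<in> \<Gamma>" using e' by simp
      qed
    next
      case False
      show ?thesis
      proof (intro exI[of _ 0] ballI impI)
        fix g :: "'a \<times> 'a" assume g: "g \<in> carrier Aff" "fst g * 0 + snd g = 0"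
        hence "g = (1, 0)" using False by (auto simp: Aff_simps prod_eq_iff)
        thus "g \<in> \<Gamma>" using oc by simp
      qed
    qed
    thus ?thesis using cardG by blast
  qed
qed

definition aff_app :: "'a::field \<times> 'a \<Rightarrow> 'a \<Rightarrow> 'a" where
  "aff_app g x = fst g * x + snd g"

lemma aff_app_mult: "aff_app (aff_mult g a) x = aff_app g (aff_app a x)"
  by (simp add: aff_app_def aff_mult_def algebra_simps)

lemma aff_app_bij: "fst a \<noteq> 0 \<Longrightarrow> bij (aff_app (a :: 'a::{finite,field} \<times> 'a))"
proof -
  assume a: "fst a \<noteq> 0"
  have "inj (aff_app a)" by (rule injI) (use a in \<open>simp add: aff_app_def\<close>)
  thus ?thesis using finite_UNIV_inj_surj[of "aff_app a"] by (simp add: bij_def)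
qed

lemma sum_bij_shift:
  fixes f :: "'a::{finite,field} \<Rightarrow> real"
  assumes "fst a \<noteq> 0"
  shows "(\<Sum>x\<in>UNIV. f (aff_app a x)) = (\<Sum>x\<in>UNIV. f x)"
  using sum.reindex_bij_betw[OF aff_app_bij[OF assms], of f] by simp

lemma sum_if_const:
  fixes c :: real
  assumes "finite A"
  shows "(\<Sum>a\<in>A. if P a then c else 0) = real (card {a\<in>A. P a}) * c"
  using sum.inter_filter[OF assms, of "\<lambda>_. c" P, symmetric] by simp

lemma cs_ineq:
  fixes w h :: "'b \<Rightarrow> real"
  assumes "finite I"
  shows "(\<Sum>i\<in>I. w i * h i)\<^sup>2 \<le> (\<Sum>i\<in>I. (w i)\<^sup>2) * (\<Sum>i\<in>I. (h i)\<^sup>2)"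
proof -
  have "0 \<le> (\<Sum>i\<in>I. \<Sum>j\<in>I. (w i * h j - w j * h i)\<^sup>2)" by (intro sum_nonneg) auto
  also have "(\<Sum>i\<in>I. \<Sum>j\<in>I. (w i * h j - w j * h i)\<^sup>2) =
     (\<Sum>i\<in>I. \<Sum>j\<in>I. (w i)\<^sup>2 * (h j)\<^sup>2) + (\<Sum>i\<in>I. \<Sum>j\<in>I. (w j)\<^sup>2 * (h i)\<^sup>2)
     - 2 * (\<Sum>i\<in>I. \<Sum>j\<in>I. (w i * h i) * (w j * h j))"
    by (simp add: power2_eq_square algebra_simps sum.distrib sum_subtractf sum_distrib_left)
  also have "\<dots> = 2 * ((\<Sum>i\<in>I. (w i)\<^sup>2) * (\<Sum>i\<in>I. (h i)\<^sup>2)) - 2 * (\<Sum>i\<in>I. w i * h i)\<^sup>2"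
    by (simp add: power2_eq_square sum_product[symmetric] sum.swap[of _ I I] mult.commute)
  finally show ?thesis by simp
qed


lemma card_agree_le:
  fixes a b :: "'a::{finite,field} \<times> 'a"
  assumes "fst a \<noteq> 0" "fst b \<noteq> 0"
  shows "real (card {x. aff_app a x = aff_app b x}) \<le> (if a = b then real (card (UNIV::'a set)) else 1)"
proof (cases "a = b")
  case True
  thus ?thesis by (simp add: card_mono)
next
  case False
  have "card {x. aff_app a x = aff_app b x} \<le> Suc 0"
  proof (subst card_le_Suc0_iff_eq, simp, intro ballI)
    fix x y assume x: "x \<in> {x. aff_app a x = aff_app b x}" and y: "y \<in> {x. aff_app a x = aff_app b x}"
    have ex: "fst a * x + snd a = fst b * x + snd b" and ey: "fst a * y + snd a = fst b * y + snd b"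
      using x y by (auto simp: aff_app_def)
    have "(fst a - fst b) * (x - y) = (fst a * x + snd a - (fst b * x + snd b)) - (fst a * y + snd a - (fst b * y + snd b))"
      by (simp add: algebra_simps)
    also have "\<dots> = 0" using ex ey by simp
    finally have "(fst a - fst b) * (x - y) = 0" .
    moreover have "fst a \<noteq> fst b"
    proof
      assume "fst a = fst b"
      hence "snd a = snd b" using ex by simp
      thus False using False \<open>fst a = fst b\<close> by (simp add: prod_eq_iff)
    qed
    ultimately show "x = y" by simp
  qed
  thus ?thesis using False by simp
qed

lemma key:
  fixes A :: "('a::{finite,field} \<times> 'a) set" and h :: "'a \<Rightarrow> real"
  assumes A: "A \<subseteq> carrier Aff" and h0: "(\<Sum>x\<in>UNIV. h x) = 0"
  shows "(\<Sum>x\<in>UNIV. (\<Sum>a\<in>A. h (aff_app a x))\<^sup>2)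
           \<le> real (card A) * (real (card (UNIV::'a set)) - 1) * (\<Sum>x\<in>UNIV. (h x)\<^sup>2)"
proof -
  define q where "q = real (card (UNIV::'a set))"
  have q0: "q > 0" unfolding q_def by (simp add: finite_UNIV_card_ge_0)
  have finA: "finite A" by simp
  define M where "M x y = real (card {a\<in>A. aff_app a x = y})" for x y
  have s1: "(\<Sum>a\<in>A. f (aff_app a x)) = (\<Sum>y\<in>UNIV. M x y * f y)" for f :: "'a \<Rightarrow> real" and x
  proof -
    have "(\<Sum>a\<in>A. f (aff_app a x)) = (\<Sum>a\<in>A. \<Sum>y\<in>UNIV. if aff_app a x = y then f y else 0)"
      by simp
    also have "\<dots> = (\<Sum>y\<in>UNIV. \<Sum>a\<in>A. if aff_app a x = y then f y else 0)" by (rule sum.swap)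
    also have "\<dots> = (\<Sum>y\<in>UNIV. M x y * f y)"
      by (intro sum.cong refl) (simp only: sum_if_const[OF finA] M_def)
    finally show ?thesis .
  qed
  have rowsum: "(\<Sum>y\<in>UNIV. M x y) = real (card A)" for x using s1[of "\<lambda>_. 1" x] by simp
  define c where "c = real (card A) / q"
  have s3: "(\<Sum>a\<in>A. h (aff_app a x)) = (\<Sum>y\<in>UNIV. (M x y - c) * h y)" for x
  proof -
    have "(\<Sum>y\<in>UNIV. (M x y - c) * h y) = (\<Sum>y\<in>UNIV. M x y * h y) - c * (\<Sum>y\<in>UNIV. h y)"
      by (simp add: left_diff_distrib sum_subtractf sum_distrib_left)
    thus ?thesis using s1[of h x] h0 by simp
  qed
  have s4: "(\<Sum>a\<in>A. h (aff_app a x))\<^sup>2 \<le> (\<Sum>y\<in>UNIV. (M x y - c)\<^sup>2) * (\<Sum>y\<in>UNIV. (h y)\<^sup>2)" for x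
    unfolding s3 by (rule cs_ineq) simp
  have sq_row: "(\<Sum>y\<in>UNIV. (M x y - c)\<^sup>2) = (\<Sum>y\<in>UNIV. (M x y)\<^sup>2) - 2 * c * real (card A) + q * c\<^sup>2" for x
  proof -
    have "(\<Sum>y\<in>UNIV. (M x y - c)\<^sup>2) = (\<Sum>y\<in>UNIV. (M x y)\<^sup>2 - 2 * c * M x y + c\<^sup>2)"
      by (intro sum.cong refl) (simp add: power2_eq_square algebra_simps)
    also have "\<dots> = (\<Sum>y\<in>UNIV. (M x y)\<^sup>2) - 2 * c * (\<Sum>y\<in>UNIV. M x y) + q * c\<^sup>2"
      by (simp add: sum.distrib sum_subtractf sum_distrib_left q_def)
    finally show ?thesis using rowsum by simp
  qed
  have Msq: "(M x y)\<^sup>2 = (\<Sum>a\<in>A. \<Sum>b\<in>A. if aff_app a x = y \<and> aff_app b x = y then 1 else 0)" for x y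
  proof -
    have "M x y = (\<Sum>a\<in>A. if aff_app a x = y then 1 else 0)"
      unfolding M_def using sum_if_const[OF finA, of "\<lambda>a. aff_app a x = y" 1] by simp
    hence "(M x y)\<^sup>2 = (\<Sum>a\<in>A. if aff_app a x = y then 1 else 0) * (\<Sum>b\<in>A. if aff_app b x = y then 1 else (0::real))"
      by (simp add: power2_eq_square)
    also have "\<dots> = (\<Sum>a\<in>A. \<Sum>b\<in>A. if aff_app a x = y \<and> aff_app b x = y then 1 else 0)"
      unfolding sum_product by (intro sum.cong refl) simp
    finally show ?thesis .
  qed
  have rowM: "(\<Sum>y\<in>UNIV. (M x y)\<^sup>2) = (\<Sum>a\<in>A. \<Sum>b\<in>A. if aff_app a x = aff_app b x then 1 else 0)" for x
  proof -
    have "(\<Sum>y\<in>UNIV. (M x y)\<^sup>2) = (\<Sum>y\<in>UNIV. \<Sum>a\<in>A. \<Sum>b\<in>A. if aff_app a x = y \<and> aff_app b x = y then 1 else (0::real))"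
      by (simp only: Msq)
    also have "\<dots> = (\<Sum>a\<in>A. \<Sum>b\<in>A. \<Sum>y\<in>UNIV. if aff_app a x = y \<and> aff_app b x = y then 1 else (0::real))"
      by (simp only: sum.swap[of _ UNIV] sum.swap[of _ UNIV A])
    also have "\<dots> = (\<Sum>a\<in>A. \<Sum>b\<in>A. if aff_app a x = aff_app b x then 1 else 0)"
    proof (intro sum.cong refl)
      fix a b
      show "(\<Sum>y\<in>UNIV. if aff_app a x = y \<and> aff_app b x = y then 1 else (0::real))
             = (if aff_app a x = aff_app b x then 1 else 0)"
      proof (cases "aff_app a x = aff_app b x")
        case False
        hence "\<And>y. \<not> (aff_app a x = y \<and> aff_app b x = y)" by auto
        hence "(\<Sum>y\<in>UNIV. if aff_app a x = y \<and> aff_app b x = y then 1 else (0::real)) = 0"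
          by (intro sum.neutral) auto
        thus ?thesis using False by simp
      qed auto
    qed
    finally show ?thesis .
  qed
  have totM: "(\<Sum>x\<in>UNIV. \<Sum>y\<in>UNIV. (M x y)\<^sup>2) \<le> real (card A) * (real (card A) + q - 1)"
  proof -
    have "(\<Sum>x\<in>UNIV. \<Sum>y\<in>UNIV. (M x y)\<^sup>2) = (\<Sum>a\<in>A. \<Sum>b\<in>A. \<Sum>x\<in>UNIV. if aff_app a x = aff_app b x then 1 else (0::real))"
      by (simp only: rowM sum.swap[of _ UNIV] sum.swap[of _ UNIV A])
    also have "\<dots> = (\<Sum>a\<in>A. \<Sum>b\<in>A. real (card {x. aff_app a x = aff_app b x}))"
      by (intro sum.cong refl) (simp add: sum_if_const[OF finite_UNIV])
    also have "\<dots> \<le> (\<Sum>a\<in>A. \<Sum>b\<in>A. (if a = b then q else 1))"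
      unfolding q_def using A by (intro sum_mono card_agree_le) (auto simp: Aff_simps)
    also have "\<dots> = (\<Sum>a\<in>A. real (card A) + q - 1)"
    proof (intro sum.cong refl)
      fix a assume a: "a \<in> A"
      have "(\<Sum>b\<in>A. (if a = b then q else 1)) = (\<Sum>b\<in>A. 1 + (if a = b then q - 1 else 0))"
        by (intro sum.cong refl) auto
      also have "\<dots> = real (card A) + (q - 1)" using a by (simp add: sum.distrib)
      finally show "(\<Sum>b\<in>A. (if a = b then q else 1)) = real (card A) + q - 1" by simp
    qed
    also have "\<dots> = real (card A) * (real (card A) + q - 1)" by simp
    finally show ?thesis .
  qed
  have s5: "(\<Sum>x\<in>UNIV. \<Sum>y\<in>UNIV. (M x y - c)\<^sup>2) \<le> real (card A) * (q - 1)"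
  proof -
    have "(\<Sum>x\<in>UNIV. \<Sum>y\<in>UNIV. (M x y - c)\<^sup>2) = (\<Sum>x\<in>UNIV. \<Sum>y\<in>UNIV. (M x y)\<^sup>2) - q * (2 * c * real (card A)) + q * (q * c\<^sup>2)"
      by (simp add: sq_row sum.distrib sum_subtractf q_def)
    also have "q * (2 * c * real (card A)) = 2 * (real (card A))\<^sup>2" using q0 by (simp add: c_def power2_eq_square)
    also have "q * (q * c\<^sup>2) = (real (card A))\<^sup>2" using q0 by (simp add: c_def power2_eq_square)
    finally show ?thesis using totM by (simp add: power2_eq_square algebra_simps)
  qed
  have "(\<Sum>x\<in>UNIV. (\<Sum>a\<in>A. h (aff_app a x))\<^sup>2) \<le> (\<Sum>x\<in>UNIV. (\<Sum>y\<in>UNIV. (M x y - c)\<^sup>2) * (\<Sum>y\<in>UNIV. (h y)\<^sup>2))"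
    by (rule sum_mono) (rule s4)
  also have "\<dots> = (\<Sum>x\<in>UNIV. \<Sum>y\<in>UNIV. (M x y - c)\<^sup>2) * (\<Sum>y\<in>UNIV. (h y)\<^sup>2)"
    by (simp add: sum_distrib_right)
  also have "\<dots> \<le> real (card A) * (q - 1) * (\<Sum>y\<in>UNIV. (h y)\<^sup>2)"
    by (rule mult_right_mono[OF s5]) (simp add: sum_nonneg)
  finally show ?thesis unfolding q_def .
qed


primrec Gf :: "('a::field \<times> 'a) set \<Rightarrow> 'a \<Rightarrow> nat \<Rightarrow> 'a \<Rightarrow> real" where
  "Gf A v 0 x = (if x = v then 1 else 0)"
| "Gf A v (Suc k) x = (\<Sum>a\<in>A. Gf A v k (aff_app a x))"

lemma Gf_supp: "Gf A v k x \<noteq> 0 \<Longrightarrow> \<exists>g\<in>aff_setpow A k. aff_app g x = v"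
proof (induction k arbitrary: x)
  case 0
  hence "x = v" by (simp split: if_splits)
  thus ?case by (simp add: aff_app_def)
next
  case (Suc k)
  have "\<exists>a\<in>A. Gf A v k (aff_app a x) \<noteq> 0"
  proof (rule ccontr)
    assume "\<not> ?thesis"
    hence "Gf A v (Suc k) x = 0" by simp
    thus False using Suc.prems by simp
  qed
  then obtain a where a: "a \<in> A" "Gf A v k (aff_app a x) \<noteq> 0" by blast
  obtain g where g: "g \<in> aff_setpow A k" "aff_app g (aff_app a x) = v" using Suc.IH[OF a(2)] by blast
  have "aff_mult g a \<in> {aff_mult x a | x a. x \<in> aff_setpow A k \<and> a \<in> A}" using g(1) a(1) by blast
  hence "aff_mult g a \<in> aff_setpow A (Suc k)" by simp
  moreover have "aff_app (aff_mult g a) x = v" using g(2) by (simp add: aff_app_mult)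
  ultimately show ?case by blast
qed

lemma Gf_sum:
  fixes A :: "('a::{finite,field} \<times> 'a) set"
  assumes A: "A \<subseteq> carrier Aff"
  shows "(\<Sum>x\<in>UNIV. Gf A v k x) = real (card A) ^ k"
proof (induction k)
  case 0
  show ?case by simp
next
  case (Suc k)
  have "(\<Sum>x\<in>UNIV. Gf A v (Suc k) x) = (\<Sum>a\<in>A. \<Sum>x\<in>UNIV. Gf A v k (aff_app a x))"
    by (simp add: sum.swap[of _ UNIV A])
  also have "\<dots> = (\<Sum>a\<in>A. \<Sum>x\<in>UNIV. Gf A v k x)"
    using A by (intro sum.cong refl sum_bij_shift) (auto simp: Aff_simps)
  also have "\<dots> = real (card A) ^ Suc k" using Suc by simp
  finally show ?case .
qed

lemma reach:
  fixes A :: "('a::{finite,field} \<times> 'a) set"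
  assumes A: "A \<subseteq> carrier Aff"
    and big: "real (card A) ^ n > real (card (UNIV::'a set)) ^ 2 * (real (card (UNIV::'a set)) - 1) ^ n"
  shows "\<exists>g\<in>aff_setpow A n. aff_app g u = v"
proof (rule ccontr)
  assume nog: "\<not> ?thesis"
  define q where "q = real (card (UNIV::'a set))"
  have q0: "q > 0" unfolding q_def by (simp add: finite_UNIV_card_ge_0)
  define N where "N = real (card A)"
  define hk where "hk k x = Gf A v k x - N ^ k / q" for k x
  have hsum: "(\<Sum>x\<in>UNIV. hk k x) = 0" for k
    unfolding hk_def using Gf_sum[OF A, of v k] q0 by (simp add: sum_subtractf q_def N_def)
  have hrec: "hk (Suc k) x = (\<Sum>a\<in>A. hk k (aff_app a x))" for k x
    unfolding hk_def by (simp add: sum_subtractf N_def)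
  have S: "(\<Sum>x\<in>UNIV. (hk k x)\<^sup>2) \<le> (N * (q - 1)) ^ k * (\<Sum>x\<in>UNIV. (hk 0 x)\<^sup>2)" for k
  proof (induction k)
    case 0 show ?case by simp
  next
    case (Suc k)
    have "(\<Sum>x\<in>UNIV. (hk (Suc k) x)\<^sup>2) = (\<Sum>x\<in>UNIV. (\<Sum>a\<in>A. hk k (aff_app a x))\<^sup>2)"
      by (simp only: hrec)
    also have "\<dots> \<le> N * (q - 1) * (\<Sum>x\<in>UNIV. (hk k x)\<^sup>2)"
      unfolding N_def q_def by (rule key[OF A hsum])
    also have "\<dots> \<le> N * (q - 1) * ((N * (q - 1)) ^ k * (\<Sum>x\<in>UNIV. (hk 0 x)\<^sup>2))"
      by (rule mult_left_mono[OF Suc]) (use q0 in \<open>simp add: N_def q_def\<close>)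
    finally show ?case by (simp add: mult_ac)
  qed
  have S0: "(\<Sum>x\<in>UNIV. (hk 0 x)\<^sup>2) \<le> 1"
  proof -
    have pt: "(hk 0 x)\<^sup>2 = Gf A v 0 x * (1 - 2 / q) + 1 / q\<^sup>2" for x
      unfolding hk_def using q0 by (cases "x = v") (auto simp: power2_eq_square field_simps)
    have "(\<Sum>x\<in>UNIV. (hk 0 x)\<^sup>2) = (\<Sum>x\<in>UNIV. Gf A v 0 x * (1 - 2 / q)) + (\<Sum>x\<in>(UNIV::'a set). 1 / q\<^sup>2)"
      by (simp only: pt sum.distrib)
    also have "(\<Sum>x\<in>UNIV. Gf A v 0 x * (1 - 2 / q)) = (\<Sum>x\<in>UNIV. Gf A v 0 x) * (1 - 2 / q)"
      by (rule sum_distrib_right[symmetric])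
    also have "(\<Sum>x\<in>UNIV. Gf A v 0 x) = 1" using Gf_sum[OF A, of v 0] by simp
    also have "(\<Sum>x\<in>(UNIV::'a set). 1 / q\<^sup>2) = q * (1 / q\<^sup>2)" by (simp add: q_def)
    also have "1 * (1 - 2 / q) + q * (1 / q\<^sup>2) = 1 - 1 / q" using q0 by (simp add: power2_eq_square field_simps)
    finally show ?thesis using q0 by simp
  qed
  have "Gf A v n u = 0" using Gf_supp nog by blast
  hence hu: "hk n u = - (N ^ n / q)" by (simp add: hk_def)
  have "(hk n u)\<^sup>2 \<le> (\<Sum>x\<in>UNIV. (hk n x)\<^sup>2)"
    by (rule member_le_sum) auto
  also have "\<dots> \<le> (N * (q - 1)) ^ n * (\<Sum>x\<in>UNIV. (hk 0 x)\<^sup>2)" by (rule S)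
  also have "\<dots> \<le> (N * (q - 1)) ^ n"
  proof -
    have "q \<ge> 1" using q0 unfolding q_def by (simp add: Suc_leI finite_UNIV_card_ge_0)
    hence "(N * (q - 1)) ^ n \<ge> 0" by (simp add: N_def)
    thus ?thesis using S0 by (simp add: mult_left_le)
  qed
  finally have "(N ^ n / q)\<^sup>2 \<le> N ^ n * (q - 1) ^ n" using hu by (simp add: power_mult_distrib)
  hence X: "N ^ n * N ^ n \<le> N ^ n * (q\<^sup>2 * (q - 1) ^ n)"
    using q0 by (simp add: power2_eq_square field_simps)
  have "N ^ n > 0"
  proof -
    have "q \<ge> 1" unfolding q_def by (simp add: Suc_leI finite_UNIV_card_ge_0)
    hence "q\<^sup>2 * (q - 1) ^ n \<ge> 0" by simp
    thus ?thesis using big unfolding N_def q_def by linarith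
  qed
  hence "N ^ n \<le> q\<^sup>2 * (q - 1) ^ n" using X by (rule mult_left_le_imp_le[rotated]) 
  thus False using big unfolding N_def q_def by simp
qed

lemma setpow_carrier:
  fixes A :: "('a::field \<times> 'a) set"
  assumes "A \<subseteq> carrier Aff"
  shows "aff_setpow A k \<subseteq> carrier Aff \<and> (A \<noteq> {} \<longrightarrow> aff_setpow A k \<noteq> {})"
proof (induction k)
  case 0 show ?case by (simp add: Aff_simps)
next
  case (Suc k)
  have "aff_setpow A (Suc k) \<subseteq> carrier Aff"
  proof
    fix y assume "y \<in> aff_setpow A (Suc k)"
    then obtain x a where xa: "y = aff_mult x a" "x \<in> aff_setpow A k" "a \<in> A" by auto
    have "fst x \<noteq> 0" "fst a \<noteq> 0" using xa Suc assms by (auto simp: Aff_simps)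
    thus "y \<in> carrier Aff" using xa by (simp add: Aff_simps aff_mult_def)
  qed
  moreover have "A \<noteq> {} \<longrightarrow> aff_setpow A (Suc k) \<noteq> {}"
  proof
    assume "A \<noteq> {}"
    then obtain a x where "a \<in> A" "x \<in> aff_setpow A k" using Suc by blast
    hence "aff_mult x a \<in> {aff_mult x a | x a. x \<in> aff_setpow A k \<and> a \<in> A}" by blast
    hence "aff_mult x a \<in> aff_setpow A (Suc k)" by (simp only: aff_setpow.simps)
    thus "aff_setpow A (Suc k) \<noteq> {}" by blast
  qed
  ultimately show ?case by blast
qed

lemma lcoset_mem:
  fixes z g :: "'a::field \<times> 'a"
  assumes "z \<in> carrier Aff" "(fst g / fst z, (snd g - snd z) / fst z) \<in> \<Gamma>"
  shows "g \<in> l_coset Aff z \<Gamma>"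
proof -
  have "z \<otimes>\<^bsub>Aff\<^esub> (fst g / fst z, (snd g - snd z) / fst z) = g"
    using assms(1) by (simp add: Aff_simps aff_mult_def prod_eq_iff)
  thus ?thesis using assms(2) unfolding l_coset_def by force
qed

lemma rcoset_mem:
  fixes z g :: "'a::field \<times> 'a"
  assumes "z \<in> carrier Aff" "(fst g / fst z, snd g - fst g * snd z / fst z) \<in> \<Gamma>"
  shows "g \<in> r_coset Aff \<Gamma> z"
proof -
  have "(fst g / fst z, snd g - fst g * snd z / fst z) \<otimes>\<^bsub>Aff\<^esub> z = g"
    using assms(1) by (simp add: Aff_simps aff_mult_def prod_eq_iff)
  thus ?thesis using assms(2) unfolding r_coset_def by force
qed

theorem corollary7:
  fixes A \<Gamma> :: "('a::{finite,field} \<times> 'a) set"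
    and z :: "'a \<times> 'a" and n :: nat
  assumes "A \<subseteq> carrier Aff"
    and "subgroup \<Gamma> Aff"
    and "\<forall>\<chi>::'a \<Rightarrow> complex. mult_char \<chi> \<and> nontrivial_char \<chi> \<longrightarrow>
            (\<exists>\<gamma>\<in>\<Gamma>. \<chi> (fst \<gamma>) \<noteq> 1)"
    and "z \<in> carrier Aff"
    and "n \<ge> 1"
    and "real (card A) ^ n * real (card \<Gamma>) ^ 2
           > real (card (UNIV :: 'a set)) ^ (n + 2) * (real (card (UNIV :: 'a set)) - 1) ^ 2"
  shows "aff_setpow A n \<inter> l_coset Aff z \<Gamma> \<noteq> {}
       \<and> aff_setpow A n \<inter> r_coset Aff \<Gamma> z \<noteq> {}"
proof -
  note A = assms(1) and sub = assms(2) and z = assms(4) and n1 = assms(5) and big = assms(6)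
  define q where "q = real (card (UNIV::'a set))"
  have "card {0::'a, 1} \<le> card (UNIV::'a set)" by (rule card_mono) auto
  hence q2: "q \<ge> 2" unfolding q_def by simp
  have surj: "\<And>c. c \<noteq> 0 \<Longrightarrow> \<exists>e. (c, e) \<in> \<Gamma>" using slope_surj[OF sub assms(3)] by blast
  have zc: "fst z \<noteq> 0" using z by (simp add: Aff_simps)
  have "A \<noteq> {}"
  proof
    assume "A = {}"
    hence "real (card A) ^ n * real (card \<Gamma>) ^ 2 = 0" using n1 by simp
    moreover have "q ^ (n + 2) * (q - 1) ^ 2 > 0" using q2 by simp
    ultimately show False using big unfolding q_def by linarith
  qed
  hence Ane: "aff_setpow A n \<noteq> {}" and Acar: "aff_setpow A n \<subseteq> carrier Aff"
    using setpow_carrier[OF A] by blast+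
  from classify[OF sub surj]
  show ?thesis
  proof
    assume whole: "\<Gamma> = carrier Aff"
    obtain g where g: "g \<in> aff_setpow A n" using Ane by blast
    have gc: "fst g \<noteq> 0" using g Acar by (auto simp: Aff_simps)
    have "g \<in> l_coset Aff z \<Gamma>" using zc gc z by (intro lcoset_mem) (auto simp: whole Aff_simps)
    moreover have "g \<in> r_coset Aff \<Gamma> z" using zc gc z by (intro rcoset_mem) (auto simp: whole Aff_simps)
    ultimately show ?thesis using g by blast
  next
    assume "card \<Gamma> \<le> card (UNIV::'a set) - 1 \<and> (\<exists>x0. \<forall>g\<in>carrier Aff. fst g * x0 + snd g = x0 \<longrightarrow> g \<in> \<Gamma>)"
    then obtain x0 where cG: "card \<Gamma> \<le> card (UNIV::'a set) - 1"
      and st: "\<And>g. g \<in> carrier Aff \<Longrightarrow> fst g * x0 + snd g = x0 \<Longrightarrow> g \<in> \<Gamma>" by blast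
    have "real (card \<Gamma>) \<le> q - 1" using cG q2 unfolding q_def by linarith
    hence "real (card \<Gamma>) ^ 2 \<le> (q - 1) ^ 2" by (simp add: power_mono)
    hence "real (card A) ^ n * real (card \<Gamma>) ^ 2 \<le> real (card A) ^ n * (q - 1) ^ 2"
      by (simp add: mult_left_mono)
    hence "q ^ (n + 2) * (q - 1) ^ 2 < real (card A) ^ n * (q - 1) ^ 2" using big unfolding q_def by linarith
    hence b1: "q ^ (n + 2) < real (card A) ^ n" using q2 by (simp add: mult_less_cancel_right)
    have "(q - 1) ^ n \<le> q ^ n" using q2 by (simp add: power_mono)
    hence "q ^ 2 * (q - 1) ^ n \<le> q ^ 2 * q ^ n" by (rule mult_left_mono) simp
    also have "q ^ 2 * q ^ n = q ^ (n + 2)" by (simp only: power_add mult.commute)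
    finally have "q ^ 2 * (q - 1) ^ n \<le> q ^ (n + 2)" .
    hence bigA: "real (card A) ^ n > q ^ 2 * (q - 1) ^ n" using b1 by linarith
    obtain g1 where g1: "g1 \<in> aff_setpow A n" "aff_app g1 x0 = aff_app z x0"
      using reach[OF A bigA[unfolded q_def]] by blast
    obtain g2 where g2: "g2 \<in> aff_setpow A n" "aff_app g2 ((x0 - snd z) / fst z) = x0"
      using reach[OF A bigA[unfolded q_def]] by blast
    have g1c: "fst g1 \<noteq> 0" using g1 Acar by (auto simp: Aff_simps)
    have g2c: "fst g2 \<noteq> 0" using g2 Acar by (auto simp: Aff_simps)
    have "g1 \<in> l_coset Aff z \<Gamma>"
    proof (rule lcoset_mem[OF z], rule st)
      show "(fst g1 / fst z, (snd g1 - snd z) / fst z) \<in> carrier Aff" using g1c zc by (simp add: Aff_simps)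
      show "fst (fst g1 / fst z, (snd g1 - snd z) / fst z) * x0 + snd (fst g1 / fst z, (snd g1 - snd z) / fst z) = x0"
        using g1(2) zc by (simp add: aff_app_def field_simps)
    qed
    moreover have "g2 \<in> r_coset Aff \<Gamma> z"
    proof (rule rcoset_mem[OF z], rule st)
      show "(fst g2 / fst z, snd g2 - fst g2 * snd z / fst z) \<in> carrier Aff" using g2c zc by (simp add: Aff_simps)
      show "fst (fst g2 / fst z, snd g2 - fst g2 * snd z / fst z) * x0 + snd (fst g2 / fst z, snd g2 - fst g2 * snd z / fst z) = x0"
        using g2(2) zc by (simp add: aff_app_def field_simps)
    qed
    ultimately show ?thesis using g1 g2 by blast
  qed
qed

end
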